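(* Let $T$ be a monad on $\mathsf{Set}$, let $X,Y$ be sets, let $\mu\in T(X)$ have formal presentation $(\Gamma,\langle x_i\rangle_{i\in[n]})$ with $\Gamma\in T([n])$, and let $f:X\to T(Y)$. For each $i\in[n]$ let $(\Delta_i,\langle y_{i,j}\rangle_{j\in[m_i]})$, with $\Delta_i\in T([m_i])$, be a formal presentation of $f(x_i)$. Then $\mu\mathrel{>\!\!>=} f$ has the formal presentation $(\Xi,\langle y_{i,j}\rangle_{i\in[n],\,j\in[m_i]})$, where $\Xi\in T([l])$, $l=\sum_{i\in[n]}m_i$, is the sequential composition of $\Gamma$ with the family $(\Delta_i)_{i\in[n]}$.
   Context: $[n]=\{1,\dots,n\}$ for $n\in\mathbb{N}$, $[\omega]=\mathbb{N}$; $\mathbb{N}\cup\{\omega\}$ indexes these sets and $[l]$ is identified (via a fixed bijection) with the disjoint union $\coprod_{i\in[n]}[m_i]$, so that sequences indexed by pairs $(i,j)$ with $j\in[m_i]$ are sequences indexed by $[l]$. For $\mu\in T(X)$ and $f:X\to T(Y)$, $\mu\mathrel{>\!\!>=} f$ is the Kleisli extension of $f$ applied to $\mu$. A formal presentation of $\mu\in T(X)$ is a pair $(\Gamma,x)$ with $\Gamma\in T([n])$ and $x:[n]\to X$ (a sequence $\langle x_i\rangle$) such that $\mu=T(x)(\Gamma)$. An $n$-ary algebraic operation is a family $\gamma_X:T(X)^n\to T(X)$ with $\gamma_X(\mu_1,\dots)\mathrel{>\!\!>=} f=\gamma_Y(\mu_1\mathrel{>\!\!>=} f,\dots)$ for all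 $f:X\to T(Y)$; generic effects $\Gamma\in T([n])$ correspond bijectively to $n$-ary algebraic operations via $\gamma_X(\mu_1,\dots,\mu_i,\dots)=\Gamma\mathrel{>\!\!>=}(i\mapsto\mu_i)$ and $\Gamma=\gamma_{[n]}(\eta(1),\dots,\eta(i),\dots)$. The sequential composition of $\Gamma\in T([n])$ (with operation $\gamma$) and $\Delta_i\in T([m_i])$ (with operations $\delta_i$) is the generic effect in $T([l])$ corresponding to the $l$-ary algebraic operation $T(Z)^{l}\cong\prod_{i\in[n]}T(Z)^{m_i}\xrightarrow{\langle\delta_i\rangle_i}T(Z)^n\xrightarrow{\gamma}T(Z)$. *)

theory Defs
  imports Main "HOL-Library.Extended_Nat" "HOL-Library.FuncSet"
begin

text \<open>A monad on Set, given as a Kleisli triple on all subsets of a universe type 'u.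
  T X is the carrier of T(X) inside a value type 't, eta X is the unit at X,
  bind X Y mu f is mu >>= f for mu in T(X), f : X -> T(Y).  Functions are only
  relevant on their domain X (extensionality law).\<close>

definition kleisli_monad ::
  "('u set \<Rightarrow> 't set) \<Rightarrow> ('u set \<Rightarrow> 'u \<Rightarrow> 't)
    \<Rightarrow> ('u set \<Rightarrow> 'u set \<Rightarrow> 't \<Rightarrow> ('u \<Rightarrow> 't) \<Rightarrow> 't) \<Rightarrow> bool" where
  "kleisli_monad T eta bind \<longleftrightarrow>
     (\<forall>X x. x \<in> X \<longrightarrow> eta X x \<in> T X) \<and>
     (\<forall>X Y mu f. mu \<in> T X \<longrightarrow> f \<in> X \<rightarrow> T Y \<longrightarrow> bind X Y mu f \<in> T Y) \<and>
     (\<forall>X Y mu f g. mu \<in> T X \<longrightarrow> (\<forall>x\<in>X. f x = g x) \<longrightarrow> bind X Y mu f = bind X Y mu g) \<and>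
     (\<forall>X Y x f. x \<in> X \<longrightarrow> f \<in> X \<rightarrow> T Y \<longrightarrow> bind X Y (eta X x) f = f x) \<and>
     (\<forall>X mu. mu \<in> T X \<longrightarrow> bind X X mu (eta X) = mu) \<and>
     (\<forall>X Y Z mu f g. mu \<in> T X \<longrightarrow> f \<in> X \<rightarrow> T Y \<longrightarrow> g \<in> Y \<rightarrow> T Z \<longrightarrow>
        bind Y Z (bind X Y mu f) g = bind X Z mu (\<lambda>x. bind Y Z (f x) g))"

text \<open>[n] = {1..n} for n in N, and [omega] = N (= {1,2,...}).\<close>
definition idx :: "enat \<Rightarrow> nat set" where
  "idx n = {k. 1 \<le> k \<and> enat k \<le> n}"

text \<open>The universe is 'a + nat: user sets X are Inl ` X, index sets [n] are Inr ` [n].\<close>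
definition uidx :: "enat \<Rightarrow> ('a + nat) set" where
  "uidx n = Inr ` idx n"

definition tmap ::
  "(('a + nat) set \<Rightarrow> ('a + nat) \<Rightarrow> 't)
    \<Rightarrow> (('a + nat) set \<Rightarrow> ('a + nat) set \<Rightarrow> 't \<Rightarrow> (('a + nat) \<Rightarrow> 't) \<Rightarrow> 't)
    \<Rightarrow> enat \<Rightarrow> 'a set \<Rightarrow> (nat \<Rightarrow> 'a) \<Rightarrow> 't \<Rightarrow> 't" where
  "tmap eta bind n X x Gamma = bind (uidx n) (Inl ` X) Gamma (\<lambda>k. eta (Inl ` X) (Inl (x (projr k))))"

definition formal_presentation ::
  "(('a + nat) set \<Rightarrow> 't set) \<Rightarrow> (('a + nat) set \<Rightarrow> ('a + nat) \<Rightarrow> 't)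
    \<Rightarrow> (('a + nat) set \<Rightarrow> ('a + nat) set \<Rightarrow> 't \<Rightarrow> (('a + nat) \<Rightarrow> 't) \<Rightarrow> 't)
    \<Rightarrow> 'a set \<Rightarrow> 't \<Rightarrow> enat \<Rightarrow> 't \<Rightarrow> (nat \<Rightarrow> 'a) \<Rightarrow> bool" where
  "formal_presentation T eta bind X mu n Gamma x \<longleftrightarrow>
     Gamma \<in> T (uidx n) \<and> (\<forall>i\<in>idx n. x i \<in> X) \<and> mu = tmap eta bind n X x Gamma"

text \<open>The n-ary algebraic operation gamma_Z corresponding to a generic effect Gamma in T([n]).\<close>
definition alg_op ::
  "(('a + nat) set \<Rightarrow> ('a + nat) set \<Rightarrow> 't \<Rightarrow> (('a + nat) \<Rightarrow> 't) \<Rightarrow> 't)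
    \<Rightarrow> enat \<Rightarrow> 't \<Rightarrow> ('a + nat) set \<Rightarrow> (nat \<Rightarrow> 't) \<Rightarrow> 't" where
  "alg_op bind n Gamma Z nu = bind (uidx n) Z Gamma (\<lambda>k. nu (projr k))"

definition gen_of_op ::
  "(('a + nat) set \<Rightarrow> ('a + nat) \<Rightarrow> 't) \<Rightarrow> enat
    \<Rightarrow> (('a + nat) set \<Rightarrow> (nat \<Rightarrow> 't) \<Rightarrow> 't) \<Rightarrow> 't" where
  "gen_of_op eta n gam = gam (uidx n) (\<lambda>i. eta (uidx n) (Inr i))"

text \<open>Sequential composition of Gamma in T([n]) with Delta_i in T([m_i]), where
  beta : [l] -> coprod_{i in [n]} [m_i] is the fixed identifying bijection.\<close>
definition seq_comp ::
  "(('a + nat) set \<Rightarrow> ('a + nat) \<Rightarrow> 't)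
    \<Rightarrow> (('a + nat) set \<Rightarrow> ('a + nat) set \<Rightarrow> 't \<Rightarrow> (('a + nat) \<Rightarrow> 't) \<Rightarrow> 't)
    \<Rightarrow> enat \<Rightarrow> 't \<Rightarrow> (nat \<Rightarrow> enat) \<Rightarrow> (nat \<Rightarrow> 't) \<Rightarrow> enat \<Rightarrow> (nat \<Rightarrow> nat \<times> nat) \<Rightarrow> 't" where
  "seq_comp eta bind n Gamma m Delta l beta =
     gen_of_op eta l
       (\<lambda>Z rho. alg_op bind n Gamma Z
          (\<lambda>i. alg_op bind (m i) (Delta i) Z (\<lambda>j. rho (inv_into (idx l) beta (i, j)))))"

end

theory Submission
  imports Defs
begin

theorem theorem5p10:
  fixes T :: "('a + nat) set \<Rightarrow> 't set"
    and eta :: "('a + nat) set \<Rightarrow> ('a + nat) \<Rightarrow> 't"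
    and bind :: "('a + nat) set \<Rightarrow> ('a + nat) set \<Rightarrow> 't \<Rightarrow> (('a + nat) \<Rightarrow> 't) \<Rightarrow> 't"
    and X Y :: "'a set" and mu :: 't and n :: enat and Gamma :: 't and x :: "nat \<Rightarrow> 'a"
    and f :: "'a \<Rightarrow> 't"
    and m :: "nat \<Rightarrow> enat" and Delta :: "nat \<Rightarrow> 't" and y :: "nat \<Rightarrow> nat \<Rightarrow> 'a"
    and l :: enat and beta :: "nat \<Rightarrow> nat \<times> nat"
  assumes monad: "kleisli_monad T eta bind"
    and mu_pres: "formal_presentation T eta bind X mu n Gamma x"
    and f_map: "f \<in> X \<rightarrow> T (Inl ` Y)"
    and f_pres: "\<forall>i\<in>idx n. formal_presentation T eta bind Y (f (x i)) (m i) (Delta i) (y i)"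
    and l_def: "l = (if finite (SIGMA i:idx n. idx (m i))
                     then enat (card (SIGMA i:idx n. idx (m i))) else \<infinity>)"
    and beta: "bij_betw beta (idx l) (SIGMA i:idx n. idx (m i))"
  shows "formal_presentation T eta bind Y
           (bind (Inl ` X) (Inl ` Y) mu (\<lambda>u. f (projl u)))
           l (seq_comp eta bind n Gamma m Delta l beta)
           (\<lambda>k. y (fst (beta k)) (snd (beta k)))"
proof -
  note M = monad[unfolded kleisli_monad_def]
  have
    M1: "\<forall>X x. x \<in> X \<longrightarrow> eta X x \<in> T X" and
    M2: "\<forall>X Y mu f. mu \<in> T X \<longrightarrow> f \<in> X \<rightarrow> T Y \<longrightarrow> bind X Y mu f \<in> T Y" and
    M3: "\<forall>X Y mu f g. mu \<in> T X \<longrightarrow> (\<forall>x\<in>X. f x = g x) \<longrightarrow> bind X Y mu f = bind X Y mu g" and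
    M4: "\<forall>X Y x f. x \<in> X \<longrightarrow> f \<in> X \<rightarrow> T Y \<longrightarrow> bind X Y (eta X x) f = f x" and
    M6: "\<forall>X Y Z mu f g. mu \<in> T X \<longrightarrow> f \<in> X \<rightarrow> T Y \<longrightarrow> g \<in> Y \<rightarrow> T Z \<longrightarrow>
        bind Y Z (bind X Y mu f) g = bind X Z mu (\<lambda>x. bind Y Z (f x) g)"
    using M by auto
  have eta_T: "\<And>Z z. z \<in> Z \<Longrightarrow> eta Z z \<in> T Z" using M1 by blast
  have bind_T: "\<And>Z W nu g. nu \<in> T Z \<Longrightarrow> g \<in> Z \<rightarrow> T W \<Longrightarrow> bind Z W nu g \<in> T W" using M2 by blast
  have bind_cong: "\<And>Z W nu g h. nu \<in> T Z \<Longrightarrow> (\<And>z. z \<in> Z \<Longrightarrow> g z = h z) \<Longrightarrow> bind Z W nu g = bind Z W nu h"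
    using M3 by blast
  have unitl: "\<And>Z W z g. z \<in> Z \<Longrightarrow> g \<in> Z \<rightarrow> T W \<Longrightarrow> bind Z W (eta Z z) g = g z" using M4 by blast
  have assoc: "\<And>Z W V nu g h. nu \<in> T Z \<Longrightarrow> g \<in> Z \<rightarrow> T W \<Longrightarrow> h \<in> W \<rightarrow> T V \<Longrightarrow>
      bind W V (bind Z W nu g) h = bind Z V nu (\<lambda>z. bind W V (g z) h)" using M6 by blast
  have G: "Gamma \<in> T (uidx n)" and xX: "\<And>i. i \<in> idx n \<Longrightarrow> x i \<in> X"
    and mu: "mu = tmap eta bind n X x Gamma" using mu_pres unfolding formal_presentation_def by auto
  have D: "\<And>i. i \<in> idx n \<Longrightarrow> Delta i \<in> T (uidx (m i))"
    and yY: "\<And>i j. i \<in> idx n \<Longrightarrow> j \<in> idx (m i) \<Longrightarrow> y i j \<in> Y"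
    and fx: "\<And>i. i \<in> idx n \<Longrightarrow> f (x i) = tmap eta bind (m i) Y (y i) (Delta i)"
    using f_pres unfolding formal_presentation_def by auto
  define bi where "bi = inv_into (idx l) beta"
  have bi_in: "\<And>i j. i \<in> idx n \<Longrightarrow> j \<in> idx (m i) \<Longrightarrow> bi (i, j) \<in> idx l"
    unfolding bi_def using beta by (metis SigmaI bij_betw_def inv_into_into)
  have bi_beta: "\<And>i j. i \<in> idx n \<Longrightarrow> j \<in> idx (m i) \<Longrightarrow> beta (bi (i, j)) = (i, j)"
    unfolding bi_def using beta by (meson SigmaI bij_betw_inv_into_right)
  define yy where "yy = (\<lambda>k. y (fst (beta k)) (snd (beta k)))"
  have yy_bi: "\<And>i j. i \<in> idx n \<Longrightarrow> j \<in> idx (m i) \<Longrightarrow> yy (bi (i, j)) = y i j"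
    unfolding yy_def using bi_beta by simp
  have yyY: "\<forall>k\<in>idx l. yy k \<in> Y"
  proof
    fix k assume "k \<in> idx l"
    then have bk: "beta k \<in> (SIGMA i:idx n. idx (m i))" by (rule bij_betw_apply[OF beta])
    obtain i j where ij: "beta k = (i, j)" by fastforce
    have "i \<in> idx n" "j \<in> idx (m i)" using bk unfolding ij by blast+
    then show "yy k \<in> Y" unfolding yy_def ij fst_conv snd_conv by (rule yY)
  qed
  define Gk where "Gk = (\<lambda>k::'a + nat. bind (uidx (m (projr k))) (uidx l) (Delta (projr k))
          (\<lambda>j'. eta (uidx l) (Inr (bi (projr k, projr j')))))"
  have Xi: "seq_comp eta bind n Gamma m Delta l beta = bind (uidx n) (uidx l) Gamma Gk"
    unfolding seq_comp_def gen_of_op_def alg_op_def Gk_def bi_def by simp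
  have Gk_T: "Gk \<in> uidx n \<rightarrow> T (uidx l)"
  proof
    fix k :: "'a + nat" assume k: "k \<in> uidx n"
    then have i: "projr k \<in> idx n" unfolding uidx_def by auto
    show "Gk k \<in> T (uidx l)" unfolding Gk_def
      apply (rule bind_T[OF D[OF i]])
      using bi_in[OF i] eta_T by (auto simp: uidx_def)
  qed
  have XiT: "seq_comp eta bind n Gamma m Delta l beta \<in> T (uidx l)"
    unfolding Xi using bind_T[OF G Gk_T] .
  define h where "h = (\<lambda>k::'a + nat. eta (Inl ` Y) (Inl (yy (projr k))))"
  have hT: "h \<in> uidx l \<rightarrow> T (Inl ` Y)" unfolding h_def uidx_def using yyY eta_T by auto
  define g where "g = (\<lambda>k::'a + nat. eta (Inl ` X) (Inl (x (projr k))))"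
  have gT: "g \<in> uidx n \<rightarrow> T (Inl ` X)" unfolding g_def uidx_def using xX eta_T by auto
  define f' where "f' = (\<lambda>u::'a + nat. f (projl u))"
  have f'T: "f' \<in> Inl ` X \<rightarrow> T (Inl ` Y)" unfolding f'_def using f_map by auto
  have L: "bind (Inl ` X) (Inl ` Y) mu f' = bind (uidx n) (Inl ` Y) Gamma (\<lambda>k. f (x (projr k)))"
  proof -
    have "bind (Inl ` X) (Inl ` Y) mu f' = bind (uidx n) (Inl ` Y) Gamma (\<lambda>k. bind (Inl ` X) (Inl ` Y) (g k) f')"
      unfolding mu tmap_def g_def[symmetric] using assoc[OF G gT f'T] .
    also have "\<dots> = bind (uidx n) (Inl ` Y) Gamma (\<lambda>k. f (x (projr k)))"
    proof (rule bind_cong[OF G])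
      fix k :: "'a + nat" assume "k \<in> uidx n"
      then have "x (projr k) \<in> X" using xX unfolding uidx_def by auto
      then show "bind (Inl ` X) (Inl ` Y) (g k) f' = f (x (projr k))"
        unfolding g_def using unitl[OF _ f'T] f'_def by auto
    qed
    finally show ?thesis .
  qed
  have R: "bind (uidx l) (Inl ` Y) (seq_comp eta bind n Gamma m Delta l beta) h
     = bind (uidx n) (Inl ` Y) Gamma (\<lambda>k. f (x (projr k)))"
  proof -
    have "bind (uidx l) (Inl ` Y) (seq_comp eta bind n Gamma m Delta l beta) h
        = bind (uidx n) (Inl ` Y) Gamma (\<lambda>k. bind (uidx l) (Inl ` Y) (Gk k) h)"
      unfolding Xi using assoc[OF G Gk_T hT] .
    also have "\<dots> = bind (uidx n) (Inl ` Y) Gamma (\<lambda>k. f (x (projr k)))"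
    proof (rule bind_cong[OF G])
      fix k :: "'a + nat" assume "k \<in> uidx n"
      then have i: "projr k \<in> idx n" unfolding uidx_def by auto
      let ?i = "projr k"
      have eT: "(\<lambda>j'. eta (uidx l) (Inr (bi (?i, projr j')))) \<in> uidx (m ?i) \<rightarrow> T (uidx l)"
        using bi_in[OF i] eta_T by (auto simp: uidx_def)
      have "bind (uidx l) (Inl ` Y) (Gk k) h
          = bind (uidx (m ?i)) (Inl ` Y) (Delta ?i)
              (\<lambda>j'. bind (uidx l) (Inl ` Y) (eta (uidx l) (Inr (bi (?i, projr j')))) h)"
        unfolding Gk_def using assoc[OF D[OF i] eT hT] .
      also have "\<dots> = bind (uidx (m ?i)) (Inl ` Y) (Delta ?i) (\<lambda>j'. eta (Inl ` Y) (Inl (y ?i (projr j'))))"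
      proof (rule bind_cong[OF D[OF i]])
        fix j' :: "'a + nat" assume "j' \<in> uidx (m ?i)"
        then have j: "projr j' \<in> idx (m ?i)" unfolding uidx_def by auto
        have "Inr (bi (?i, projr j')) \<in> uidx l" using bi_in[OF i j] unfolding uidx_def by auto
        then show "bind (uidx l) (Inl ` Y) (eta (uidx l) (Inr (bi (?i, projr j')))) h
             = eta (Inl ` Y) (Inl (y ?i (projr j')))"
          using unitl[OF _ hT, of "Inr (bi (?i, projr j'))"] yy_bi[OF i j] unfolding h_def by simp
      qed
      also have "\<dots> = f (x ?i)" using fx[OF i] unfolding tmap_def by simp
      finally show "bind (uidx l) (Inl ` Y) (Gk k) h = f (x (projr k))" .
    qed
    finally show ?thesis .
  qed
  show ?thesis unfolding formal_presentation_def
    using XiT yyY L R unfolding tmap_def h_def f'_def yy_def by auto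
qed

end
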